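(* Let $P(u)=\sum_{\ell=1}^kc_\ell e^{-\lambda_\ell u}$ on $[0,\infty)$ with $0<\lambda_1<\dots<\lambda_k$ and nonzero reals $c_1,\dots,c_k$. Assume the sequence $c_1,\dots,c_k$ has at most two sign changes, $P(0)<0$, and $P(u)\to0$ from above as $u\to\infty$ (i.e. $P(u)>0$ for all sufficiently large $u$ and $\lim_{u\to\infty}P(u)=0$). Then there exists $u_0>0$ such that for every non-decreasing function $f$ on $[0,\infty)$ and every non-negative finite Borel measure $\nu$ on $[0,\infty)$ for which the integrals converge, $\int_0^\infty f(u)P(u)\,d\nu(u)\ge f(u_0)\int_0^\infty P(u)\,d\nu(u)$.
   Context: The number of sign changes of a finite sequence of nonzero reals is the number of consecutive pairs of entries with opposite signs. *)

theory Defs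
  imports "HOL-Probability.Probability"
begin

definition sign_changes :: "(nat \<Rightarrow> real) \<Rightarrow> nat \<Rightarrow> nat" where
  "sign_changes c k = card {i. 1 \<le> i \<and> i < k \<and> c i * c (i + 1) < 0}"

definition expsum :: "(nat \<Rightarrow> real) \<Rightarrow> (nat \<Rightarrow> real) \<Rightarrow> nat \<Rightarrow> real \<Rightarrow> real" where
  "expsum c lam k u = (\<Sum>l = 1..k. c l * exp (- lam l * u))"

end

theory Submission imports Defs begin

lemma expsum_deriv:
  "DERIV (expsum c lam k) u :> expsum (\<lambda>l. - c l * lam l) lam k u"
  unfolding expsum_def
  by (auto intro!: derivative_eq_intros simp: sum_negf[symmetric] intro!: sum.cong)

lemma same_sign:
  fixes l :: nat
  assumes "\<forall>l. 1 \<le> l \<and> l \<le> k \<longrightarrow> c l \<noteq> (0::real)"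
    and "\<forall>i. 1 \<le> i \<and> i < k \<longrightarrow> \<not> c i * c (i+1) < 0"
  shows "1 \<le> l \<Longrightarrow> l \<le> k \<Longrightarrow> c l * c 1 > 0"
proof (induction l)
  case 0 then show ?case by simp
next
  case (Suc l)
  show ?case
  proof (cases "l = 0")
    case True
    have "c 1 \<noteq> 0" using assms Suc True by auto
    then show ?thesis using True by (auto simp: zero_less_mult_iff linorder_neq_iff)
  next
    case False
    then have a: "c l * c 1 > 0" using Suc by simp
    have l1: "1 \<le> l" "l < k" using False Suc.prems by auto
    then have "c l \<noteq> 0" "c (l+1) \<noteq> 0" "\<not> c l * c (l+1) < 0" using assms by auto
    then have b: "c l * c (l+1) > 0" by (simp add: less_le)
    from a b show ?thesis by (simp add: zero_less_mult_iff) (smt (verit))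
  qed
qed

lemma lam_mono:
  fixes b :: nat
  assumes "\<forall>l. 1 \<le> l \<and> l < k \<longrightarrow> lam l < (lam (l + 1)::real)"
  shows "1 \<le> a \<Longrightarrow> a < b \<Longrightarrow> b \<le> k \<Longrightarrow> lam a < lam b"
proof (induction b)
  case 0 then show ?case by simp
next
  case (Suc b)
  show ?case
  proof (cases "a = b")
    case True then show ?thesis using assms Suc.prems by auto
  next
    case False
    then have "lam a < lam b" using Suc by auto
    moreover have "lam b < lam (Suc b)" using assms Suc.prems False by auto
    ultimately show ?thesis by simp
  qed
qed

lemma expsum_shift: "expsum c (\<lambda>l. lam l - s) k u = exp (s*u) * expsum c lam k u"
  unfolding expsum_def by (simp add: sum_distrib_left algebra_simps mult_exp_exp)

lemma neg_times_pos_iff: "d > 0 \<Longrightarrow> (a * d < 0) = (a < (0::real))"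
  by (simp add: mult_less_0_iff)

lemma descartes:
  fixes m :: nat
  shows "\<And>c lam x. (\<forall>l. 1 \<le> l \<and> l < k \<longrightarrow> lam l < lam (l + 1)) \<Longrightarrow>
    (\<forall>l. 1 \<le> l \<and> l \<le> k \<longrightarrow> c l \<noteq> 0) \<Longrightarrow>
    (\<forall>i<m. x i < x (i+1)) \<Longrightarrow>
    (\<forall>i<m. expsum c lam k (x i) * expsum c lam k (x (i+1)) < 0) \<Longrightarrow>
    m \<le> sign_changes c k"
proof (induction m)
  case 0 then show ?case by simp
next
  case (Suc n)
  define A where "A = {i. 1 \<le> i \<and> i < k \<and> c i * c (i + 1) < 0}"
  have finA: "finite A" unfolding A_def by (rule finite_subset[of _ "{..<k}"]) auto
  have "\<exists>j. 1 \<le> j \<and> j < k \<and> c j * c (j+1) < 0"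
  proof (rule ccontr)
    assume "\<not> ?thesis"
    then have ss: "\<And>l. 1 \<le> l \<Longrightarrow> l \<le> k \<Longrightarrow> c l * c 1 > 0"
      using same_sign[OF Suc.prems(2)] by blast
    have "expsum c lam k u * c 1 \<ge> 0" for u
      unfolding expsum_def sum_distrib_right
    proof (rule sum_nonneg)
      fix l assume "l \<in> {1..k}"
      then have "c l * c 1 > 0" using ss by auto
      then have "(c l * c 1) * exp (- lam l * u) \<ge> 0" by simp
      then show "c l * exp (- lam l * u) * c 1 \<ge> 0" by (simp add: algebra_simps)
    qed
    moreover have "c 1 \<noteq> 0 \<or> k = 0" using Suc.prems(2) by auto
    moreover have "expsum c lam 0 u = 0" for u unfolding expsum_def by simp
    moreover have "expsum c lam k (x 0) * expsum c lam k (x 1) < 0" using Suc.prems(4) by auto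
    ultimately have nn: "\<And>u. expsum c lam k u * c 1 \<ge> 0" and
      alt: "expsum c lam k (x 0) * expsum c lam k (x 1) < 0" and
      disj: "c 1 \<noteq> 0 \<or> k = 0" and z: "\<And>u. expsum c lam 0 u = 0" by auto
    show False
    proof (cases "k = 0")
      case True then show False using alt z by simp
    next
      case False
      then have "c 1 \<noteq> 0" using disj by simp
      then have cc: "c 1 * c 1 > 0" using not_real_square_gt_zero by blast
      have "(expsum c lam k (x 0) * c 1) * (expsum c lam k (x 1) * c 1) \<ge> 0"
        using nn by (simp add: zero_le_mult_iff)
      moreover have "(expsum c lam k (x 0) * c 1) * (expsum c lam k (x 1) * c 1) =
         (expsum c lam k (x 0) * expsum c lam k (x 1)) * (c 1 * c 1)" by (simp add: algebra_simps)
      ultimately have "(expsum c lam k (x 0) * expsum c lam k (x 1)) * (c 1 * c 1) \<ge> 0" by metis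
      then show False using mult_neg_pos[OF alt cc] by linarith
    qed
  qed
  then obtain j where j: "1 \<le> j" "j < k" "c j * c (j+1) < 0" by blast
  define s where "s = (lam j + lam (j+1)) / 2"
  have ljs: "lam j < s" "s < lam (j+1)" using Suc.prems(1) j unfolding s_def by auto
  have lm: "lam a < lam b" if "1 \<le> a" "a < b" "b \<le> k" for a b
    using lam_mono[OF Suc.prems(1)] that by blast
  define c' where "c' l = c l * (s - lam l)" for l
  define lam' where "lam' l = lam l - s" for l
  define Q where "Q = expsum c lam' k"
  define Q' where "Q' = expsum c' lam' k"
  have lam'inc: "\<forall>l. 1 \<le> l \<and> l < k \<longrightarrow> lam' l < lam' (l + 1)"
    using Suc.prems(1) unfolding lam'_def by auto
  have sl: "s \<noteq> lam l" if "1 \<le> l" "l \<le> k" for l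
  proof (cases "l \<le> j")
    case True
    then have "lam l \<le> lam j"
    proof (cases "l = j")
      case False
      then show ?thesis using lm[of l j] True that j by simp
    qed simp
    then show ?thesis using ljs by simp
  next
    case False
    then have "lam (j+1) \<le> lam l"
    proof (cases "l = j+1")
      case False
      then show ?thesis using lm[of "j+1" l] \<open>\<not> l \<le> j\<close> that j by simp
    qed simp
    then show ?thesis using ljs by simp
  qed
  have c'nz: "\<forall>l. 1 \<le> l \<and> l \<le> k \<longrightarrow> c' l \<noteq> 0"
  proof (intro allI impI)
    fix l assume l: "1 \<le> l \<and> l \<le> k"
    then have "c l \<noteq> 0" "s - lam l \<noteq> 0" using Suc.prems(2) sl by auto
    then show "c' l \<noteq> 0" unfolding c'_def by simp
  qed
  have deriv: "DERIV Q u :> Q' u" for u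
  proof -
    have e: "(\<lambda>l. - c l * lam' l) = c'" unfolding c'_def lam'_def by (auto simp: algebra_simps)
    show ?thesis using expsum_deriv[of c lam' k u] unfolding Q_def Q'_def e .
  qed
  have QP: "Q u = exp (s*u) * expsum c lam k u" for u
    unfolding Q_def lam'_def by (rule expsum_shift)
  have Qalt: "Q (x i) * Q (x (i+1)) < 0" if "i < Suc n" for i
  proof -
    have "Q (x i) * Q (x (i+1)) = (exp (s * x i) * exp (s * x (i+1))) *
        (expsum c lam k (x i) * expsum c lam k (x (i+1)))" unfolding QP by (simp add: algebra_simps)
    moreover have "exp (s * x i) * exp (s * x (i+1)) > 0" by simp
    ultimately show ?thesis using Suc.prems(4) that by (simp add: mult_pos_neg)
  qed
  have "\<forall>i. \<exists>z. i < Suc n \<longrightarrow> x i < z \<and> z < x (i+1) \<and> Q (x (i+1)) - Q (x i) = (x (i+1) - x i) * Q' z"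
  proof
    fix i
    show "\<exists>z. i < Suc n \<longrightarrow> x i < z \<and> z < x (i+1) \<and> Q (x (i+1)) - Q (x i) = (x (i+1) - x i) * Q' z"
    proof (cases "i < Suc n")
      case True
      then have "x i < x (i+1)" using Suc.prems(3) by auto
      from MVT2[OF this, of Q Q'] deriv show ?thesis by blast
    qed auto
  qed
  then obtain \<xi> where xi0:
    "\<forall>i. i < Suc n \<longrightarrow> x i < \<xi> i \<and> \<xi> i < x (i+1) \<and> Q (x (i+1)) - Q (x i) = (x (i+1) - x i) * Q' (\<xi> i)"
    by (rule choice[THEN exE]) blast
  then have xi: "\<And>i. i < Suc n \<Longrightarrow> x i < \<xi> i \<and> \<xi> i < x (i+1) \<and> Q (x (i+1)) - Q (x i) = (x (i+1) - x i) * Q' (\<xi> i)"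
    by blast
  have sgn: "Q' (\<xi> i) * Q (x (i+1)) > 0" if "i < Suc n" for i
  proof -
    have "(Q (x (i+1)) - Q (x i)) * Q (x (i+1)) = Q (x (i+1)) * Q (x (i+1)) - Q (x i) * Q (x (i+1))"
      by (simp add: algebra_simps)
    moreover have "Q (x (i+1)) * Q (x (i+1)) \<ge> 0" by simp
    ultimately have "(Q (x (i+1)) - Q (x i)) * Q (x (i+1)) > 0"
      using Qalt[OF that] by linarith
    moreover have "Q (x (i+1)) - Q (x i) = (x (i+1) - x i) * Q' (\<xi> i)" using xi[OF that] by blast
    ultimately have "(x (i+1) - x i) * (Q' (\<xi> i) * Q (x (i+1))) > 0"
      by (simp only: mult.assoc)
    moreover have "x (i+1) - x i > 0" using xi[OF that] by auto
    ultimately show ?thesis by (simp add: zero_less_mult_iff)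
  qed
  have xiinc: "\<forall>i<n. \<xi> i < \<xi> (i+1)" proof (intro allI impI)
    fix i assume "i < n"
    then have "\<xi> i < x (i+1)" "x (i+1) < \<xi> (i+1)" using xi[of i] xi[of "i+1"] by auto
    then show "\<xi> i < \<xi> (i+1)" by simp
  qed
  have xialt: "\<forall>i<n. Q' (\<xi> i) * Q' (\<xi> (i+1)) < 0"
  proof (intro allI impI)
    fix i assume i: "i < n"
    have a: "Q' (\<xi> i) * Q (x (i+1)) > 0" using sgn i by auto
    have b: "Q' (\<xi> (i+1)) * Q (x (i+1+1)) > 0" using sgn[of "i+1"] i by auto
    have c: "Q (x (i+1)) * Q (x (i+1+1)) < 0" using Qalt[of "i+1"] i by auto
    have e1: "(Q' (\<xi> i) * Q (x (i+1))) * (Q' (\<xi> (i+1)) * Q (x (i+1+1))) =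
      (Q' (\<xi> i) * Q' (\<xi> (i+1))) * (Q (x (i+1)) * Q (x (i+1+1)))" by (simp add: algebra_simps)
    have p1: "(Q' (\<xi> i) * Q (x (i+1))) * (Q' (\<xi> (i+1)) * Q (x (i+1+1))) > 0"
      using a b by simp
    have pos: "(Q' (\<xi> i) * Q' (\<xi> (i+1))) * (Q (x (i+1)) * Q (x (i+1+1))) > 0"
      using p1 unfolding e1 .
    show "Q' (\<xi> i) * Q' (\<xi> (i+1)) < 0"
    proof (rule ccontr)
      assume "\<not> Q' (\<xi> i) * Q' (\<xi> (i+1)) < 0"
      then have "Q' (\<xi> i) * Q' (\<xi> (i+1)) \<ge> 0" by simp
      from mult_nonneg_nonpos[OF this, of "Q (x (i+1)) * Q (x (i+1+1))"] c pos show False by linarith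
    qed
  qed
  have IH: "n \<le> sign_changes c' k"
    using Suc.IH[OF lam'inc c'nz xiinc] xialt unfolding Q'_def by blast
  have dpos: "(s - lam i) * (s - lam (i+1)) > 0" if "1 \<le> i" "i < k" "i \<noteq> j" for i
  proof (cases "i < j")
    case True
    have "lam (i+1) \<le> lam j"
    proof (cases "i + 1 = j")
      case False then show ?thesis using lm[of "i+1" j] True j by simp
    qed simp
    moreover have "lam i < lam (i+1)" using Suc.prems(1) that by auto
    ultimately show ?thesis using ljs by (simp add: mult_pos_pos)
  next
    case False
    then have ij: "j + 1 \<le> i" using that by simp
    have "lam (j+1) \<le> lam i"
    proof (cases "i = j + 1")
      case False then show ?thesis using lm[of "j+1" i] ij that j by simp
    qed simp
    moreover have "lam i < lam (i+1)" using Suc.prems(1) that by auto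
    ultimately show ?thesis using ljs by (simp add: mult_neg_neg)
  qed
  have dneg: "(s - lam j) * (s - lam (j+1)) < 0" using ljs by (simp add: mult_pos_neg)
  have eq: "c' i * c' (i+1) = (c i * c (i+1)) * ((s - lam i) * (s - lam (i+1)))" for i
    unfolding c'_def by (simp add: algebra_simps)
  have setq: "{i. 1 \<le> i \<and> i < k \<and> c' i * c' (i + 1) < 0} = A - {j}"
  proof (intro set_eqI iffI)
    fix i assume "i \<in> {i. 1 \<le> i \<and> i < k \<and> c' i * c' (i + 1) < 0}"
    then have i: "1 \<le> i" "i < k" "c' i * c' (i + 1) < 0" by auto
    have "i \<noteq> j"
    proof
      assume "i = j"
      then have "c' i * c' (i + 1) > 0" using eq[of j] dneg j(3) by (simp add: mult_neg_neg)
      then show False using i by simp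
    qed
    moreover have "c' i * c' (i+1) < 0 \<longleftrightarrow> c i * c (i+1) < 0"
      unfolding eq[of i] by (rule neg_times_pos_iff[OF dpos[OF i(1) i(2) \<open>i \<noteq> j\<close>]])
    ultimately have "c i * c (i+1) < 0" using i by simp
    then show "i \<in> A - {j}" using i \<open>i \<noteq> j\<close> unfolding A_def by simp
  next
    fix i assume "i \<in> A - {j}"
    then have i: "1 \<le> i" "i < k" "c i * c (i + 1) < 0" "i \<noteq> j" unfolding A_def by auto
    moreover have "c' i * c' (i+1) < 0 \<longleftrightarrow> c i * c (i+1) < 0"
      unfolding eq[of i] by (rule neg_times_pos_iff[OF dpos[OF i(1) i(2) i(4)]])
    ultimately have "c' i * c' (i+1) < 0" by simp
    then show "i \<in> {i. 1 \<le> i \<and> i < k \<and> c' i * c' (i + 1) < 0}" using i by simp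
  qed
  have jA: "j \<in> A" using j unfolding A_def by simp
  have "sign_changes c' k = card (A - {j})" unfolding sign_changes_def setq ..
  also have "\<dots> = card A - 1" using jA finA by (simp add: card_Diff_singleton)
  finally have sc: "sign_changes c' k = card A - 1" .
  have "card A \<ge> 1" using finA jA by (auto simp: Suc_le_eq card_gt_0_iff)
  moreover have "sign_changes c k = card A" unfolding sign_changes_def A_def ..
  ultimately show ?case using IH sc by linarith
qed

theorem mainTheorem12:
  fixes c lam :: "nat \<Rightarrow> real" and k :: nat
  assumes lam_pos: "0 < lam 1"
    and lam_incr: "\<forall>l. 1 \<le> l \<and> l < k \<longrightarrow> lam l < lam (l + 1)"
    and c_nz: "\<forall>l. 1 \<le> l \<and> l \<le> k \<longrightarrow> c l \<noteq> 0"
    and signs: "sign_changes c k \<le> 2"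
    and P0: "expsum c lam k 0 < 0"
    and Ppos: "eventually (\<lambda>u. expsum c lam k u > 0) at_top"
    and Plim: "((\<lambda>u. expsum c lam k u) \<longlongrightarrow> 0) at_top"
  shows "\<exists>u0 > 0. \<forall>(f :: real \<Rightarrow> real) (\<nu> :: real measure).
           mono_on {0..} f \<longrightarrow>
           sets \<nu> = sets (restrict_space borel {0..}) \<longrightarrow>
           finite_measure \<nu> \<longrightarrow>
           integrable \<nu> (\<lambda>u. f u * expsum c lam k u) \<longrightarrow>
           integrable \<nu> (\<lambda>u. expsum c lam k u) \<longrightarrow>
           (\<integral>u. f u * expsum c lam k u \<partial>\<nu>) \<ge> f u0 * (\<integral>u. expsum c lam k u \<partial>\<nu>)"
proof -
  define P where "P = expsum c lam k"
  obtain C where C: "\<And>u. u \<ge> C \<Longrightarrow> P u > 0"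
    using Ppos unfolding P_def eventually_at_top_linorder by blast
  have noPN: "\<not> (0 \<le> a \<and> a < b \<and> P a > 0 \<and> P b < 0)" for a b
  proof
    assume ab: "0 \<le> a \<and> a < b \<and> P a > 0 \<and> P b < 0"
    define d where "d = max C (b + 1)"
    have Pd: "P d > 0" using C unfolding d_def by simp
    have a0: "0 < a" using ab P0 unfolding P_def by (cases "a = 0") auto
    define x :: "nat \<Rightarrow> real" where "x i = (if i = 0 then 0 else if i = 1 then a else if i = 2 then b else d)" for i
    have "3 \<le> sign_changes c k"
    proof (rule descartes[OF lam_incr c_nz])
      show "\<forall>i<3. x i < x (i + 1)" using a0 ab unfolding x_def d_def
        by (auto simp: less_Suc_eq numeral_3_eq_3)
      have p0: "P 0 < 0" using P0 unfolding P_def .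
      show "\<forall>i<3. expsum c lam k (x i) * expsum c lam k (x (i + 1)) < 0"
        using p0 ab Pd unfolding x_def P_def[symmetric]
        by (auto simp: less_Suc_eq numeral_3_eq_3 mult_neg_pos mult_pos_neg)
    qed
    then show False using signs by simp
  qed
  have cont: "isCont P 0" unfolding P_def by (rule DERIV_isCont[OF expsum_deriv])
  then have "eventually (\<lambda>u. P u < 0) (at 0)"
    using P0 unfolding P_def[symmetric] isCont_def by (rule order_tendstoD)
  then obtain \<delta> where \<delta>: "\<delta> > 0" "\<And>u. u \<noteq> 0 \<Longrightarrow> dist u 0 < \<delta> \<Longrightarrow> P u < 0"
    unfolding eventually_at by auto
  define S where "S = {u. 0 \<le> u \<and> P u > 0}"
  have Sne: "S \<noteq> {}" using C[of "max C 0"] unfolding S_def by (metis (mono_tags, lifting) empty_iff max.cobounded1 max.cobounded2 mem_Collect_eq)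
  have Sbdd: "bdd_below S" unfolding S_def bdd_below_def by auto
  have Sge: "s \<ge> \<delta>" if "s \<in> S" for s
  proof (rule ccontr)
    assume "\<not> s \<ge> \<delta>"
    moreover have "0 \<le> s" "P s > 0" using that unfolding S_def by auto
    ultimately show False using \<delta>(2)[of s] P0 unfolding P_def
      by (cases "s = 0") (auto simp: dist_real_def)
  qed
  define u0 where "u0 = Inf S"
  have u0pos: "u0 > 0" unfolding u0_def using cInf_greatest[OF Sne Sge] \<delta>(1) by linarith
  have below: "P u \<le> 0" if "0 \<le> u" "u < u0" for u
  proof (rule ccontr)
    assume "\<not> P u \<le> 0"
    then have "u \<in> S" using that unfolding S_def by auto
    then have "u0 \<le> u" unfolding u0_def using Sbdd by (rule cInf_lower)
    then show False using that by simp
  qed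
  have above: "P u \<ge> 0" if "u > u0" for u
  proof -
    have "Inf S < u" using that unfolding u0_def .
    then obtain s where s: "s \<in> S" "s < u" using cInf_less_iff[OF Sne Sbdd] by blast
    then show ?thesis using noPN[of s u] unfolding S_def by auto
  qed
  have pw: "f u0 * P u \<le> f u * P u" if "mono_on {0..} f" "0 \<le> u" for f :: "real \<Rightarrow> real" and u
  proof (cases "u < u0")
    case True
    then have "f u \<le> f u0" using mono_onD[OF that(1)] that(2) u0pos by auto
    then show ?thesis using below[OF that(2) True] by (simp add: mult_right_mono_neg)
  next
    case False
    show ?thesis
    proof (cases "u = u0")
      case False
      then have "u > u0" using \<open>\<not> u < u0\<close> by simp
      then have "f u0 \<le> f u" using mono_onD[OF that(1)] that(2) u0pos by auto
      then show ?thesis using above[OF \<open>u > u0\<close>] by (simp add: mult_right_mono)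
    qed simp
  qed
  show ?thesis
  proof (intro exI[of _ u0] conjI allI impI)
    show "u0 > 0" by (rule u0pos)
    fix f :: "real \<Rightarrow> real" and \<nu> :: "real measure"
    assume mono: "mono_on {0..} f" and sets: "sets \<nu> = sets (restrict_space borel {0..})"
      and fin: "finite_measure \<nu>"
      and int1: "integrable \<nu> (\<lambda>u. f u * expsum c lam k u)"
      and int2: "integrable \<nu> (\<lambda>u. expsum c lam k u)"
    have sp: "space \<nu> = {0..}" using sets_eq_imp_space_eq[OF sets] by (simp add: space_restrict_space)
    have "f u0 * (\<integral>u. expsum c lam k u \<partial>\<nu>) = (\<integral>u. f u0 * expsum c lam k u \<partial>\<nu>)"
      by simp
    also have "\<dots> \<le> (\<integral>u. f u * expsum c lam k u \<partial>\<nu>)"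
    proof (rule integral_mono)
      show "integrable \<nu> (\<lambda>u. f u0 * expsum c lam k u)" using int2 by simp
      show "integrable \<nu> (\<lambda>u. f u * expsum c lam k u)" by (rule int1)
      fix u assume "u \<in> space \<nu>"
      then show "f u0 * expsum c lam k u \<le> f u * expsum c lam k u"
        using pw[OF mono, of u] sp unfolding P_def by auto
    qed
    finally show "f u0 * (\<integral>u. expsum c lam k u \<partial>\<nu>) \<le> (\<integral>u. f u * expsum c lam k u \<partial>\<nu>)" .
  qed
qed

end
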